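(* Let $X$ be a normed space and let $Y$ be a real vector space ordered by a convex pointed cone $K$. Let $\alpha:\mathbb{R}_+\to\mathbb{R}_+$ be nondecreasing with $\lim_{t\to0^+}\alpha(t)/t=0$. Let $A\subset X$ be convex, $k_0\in K\setminus\{0\}$, and let $F:X\to Y$ be strongly $\alpha(\cdot)$-$k_0$ paraconvex on $A$ with constant $C\ge0$. Let $x_0\in A$, $h\in X$ with $\|h\|=1$, and $t_0\in\mathbb{R}$. For $t>t_0$ with $x_0+t_0h,\,x_0+th\in A$ define $$\phi(t):=\frac{F(x_0+th)-F(x_0+t_0h)}{t-t_0}+C\,\frac{\alpha(t-t_0)}{t-t_0}\,k_0.$$ Then for all $t_0<t_1<t$ with $x_0+t_0h,\,x_0+th\in A$ we have $$\phi(t)-\phi(t_1)+C\,\frac{\alpha(t_1-t_0)}{t_1-t_0}\,k_0\in K.$$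
   Context: A cone $K$ is pointed if $K\cap(-K)=\{0\}$. For a convex cone $K\subset Y$, write $x\le_K y$ iff $y-x\in K$. A mapping $F:X\to Y$ is strongly $\alpha(\cdot)$-$k_0$ paraconvex on a convex set $A\subset X$ with constant $C\ge0$ (where $k_0\in K$) if for all $x_1,x_2\in A$ and all $\lambda\in[0,1]$, $$F(\lambda x_1+(1-\lambda)x_2)\le_K \lambda F(x_1)+(1-\lambda)F(x_2)+C\min\{\lambda,1-\lambda\}\,\alpha(\|x_1-x_2\|)\,k_0.$$ *)

theory Defs
  imports "HOL-Analysis.Analysis"
begin

definition pointed_cone :: "'a::real_vector set \<Rightarrow> bool" where
  "pointed_cone K \<longleftrightarrow> K \<inter> uminus ` K = {0}"

definition cone_le :: "'a::real_vector set \<Rightarrow> 'a \<Rightarrow> 'a \<Rightarrow> bool" where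
  "cone_le K x y \<longleftrightarrow> y - x \<in> K"

definition strongly_paraconvex ::
  "(real \<Rightarrow> real) \<Rightarrow> 'b::real_vector \<Rightarrow> 'b set \<Rightarrow> real \<Rightarrow> 'a::real_normed_vector set
     \<Rightarrow> ('a \<Rightarrow> 'b) \<Rightarrow> bool" where
  "strongly_paraconvex \<alpha> k0 K C A F \<longleftrightarrow>
     (\<forall>x1\<in>A. \<forall>x2\<in>A. \<forall>l\<in>{0..1::real}.
        cone_le K (F (l *\<^sub>R x1 + (1 - l) *\<^sub>R x2))
          (l *\<^sub>R F x1 + (1 - l) *\<^sub>R F x2
            + (C * min l (1 - l) * \<alpha> (norm (x1 - x2))) *\<^sub>R k0))"

definition phi_quot ::
  "('a::real_normed_vector \<Rightarrow> 'b::real_vector) \<Rightarrow> (real \<Rightarrow> real) \<Rightarrow> real \<Rightarrow> 'b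
     \<Rightarrow> 'a \<Rightarrow> 'a \<Rightarrow> real \<Rightarrow> real \<Rightarrow> 'b" where
  "phi_quot F \<alpha> C k0 x0 h t0 t =
     (1 / (t - t0)) *\<^sub>R (F (x0 + t *\<^sub>R h) - F (x0 + t0 *\<^sub>R h))
     + (C * (\<alpha> (t - t0) / (t - t0))) *\<^sub>R k0"

end

theory Submission
  imports Defs
begin

lemma cone_add: assumes "convex_cone K" "x \<in> K" "y \<in> K" shows "x + y \<in> K"
  using assms convex_cone_add by blast

lemma cone_scale: assumes "convex_cone K" "x \<in> K" "c \<ge> 0" shows "c *\<^sub>R x \<in> K"
  using assms convex_cone_scaleR by blast

theorem proposition3p1:
  fixes F :: "'a::real_normed_vector \<Rightarrow> 'b::real_vector"
    and K :: "'b set" and \<alpha> :: "real \<Rightarrow> real" and A :: "'a set"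
    and k0 :: 'b and C t0 :: real and x0 h :: 'a
  assumes "convex_cone K" and "pointed_cone K"
    and "\<forall>t\<ge>0. \<alpha> t \<ge> 0" and "mono_on {0..} \<alpha>"
    and "((\<lambda>t. \<alpha> t / t) \<longlongrightarrow> 0) (at_right 0)"
    and "convex A" and "k0 \<in> K" and "k0 \<noteq> 0" and "C \<ge> 0"
    and "strongly_paraconvex \<alpha> k0 K C A F"
    and "x0 \<in> A" and "norm h = 1"
  shows "\<forall>t1 t. t0 < t1 \<and> t1 < t \<and> x0 + t0 *\<^sub>R h \<in> A \<and> x0 + t *\<^sub>R h \<in> A \<longrightarrow>
           phi_quot F \<alpha> C k0 x0 h t0 t - phi_quot F \<alpha> C k0 x0 h t0 t1
             + (C * (\<alpha> (t1 - t0) / (t1 - t0))) *\<^sub>R k0 \<in> K"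
proof (intro allI impI)
  fix t1 t assume H: "t0 < t1 \<and> t1 < t \<and> x0 + t0 *\<^sub>R h \<in> A \<and> x0 + t *\<^sub>R h \<in> A"
  define a where "a = x0 + t0 *\<^sub>R h"
  define b where "b = x0 + t *\<^sub>R h"
  define d where "d = t - t0"
  define e where "e = t1 - t0"
  define l where "l = e / d"
  define m where "m = min l (1 - l)"
  have d: "d > 0" and e: "e > 0" and ed: "e < d" using H by (auto simp: d_def e_def)
  have l01: "l \<in> {0..1}" using d e ed by (auto simp: l_def)
  have xl: "l *\<^sub>R b + (1 - l) *\<^sub>R a = x0 + t1 *\<^sub>R h"
  proof -
    have "l *\<^sub>R b + (1 - l) *\<^sub>R a = x0 + (t0 + l * d) *\<^sub>R h"
      by (simp add: a_def b_def d_def algebra_simps)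
    also have "t0 + l * d = t1" using d by (simp add: l_def e_def)
    finally show ?thesis .
  qed
  have nb: "norm (b - a) = d" using d assms(12) by (simp add: a_def b_def d_def
        flip: scaleR_diff_left)
  define u where "u = F (x0 + t1 *\<^sub>R h)"
  define v where "v = l *\<^sub>R F b + (1 - l) *\<^sub>R F a + (C * m * \<alpha> d) *\<^sub>R k0"
  have vu: "v - u \<in> K"
  proof -
    have "a \<in> A" "b \<in> A" using H by (auto simp: a_def b_def)
    then have "cone_le K (F (l *\<^sub>R b + (1 - l) *\<^sub>R a))
          (l *\<^sub>R F b + (1 - l) *\<^sub>R F a + (C * min l (1 - l) * \<alpha> (norm (b - a))) *\<^sub>R k0)"
      using assms(10) l01 unfolding strongly_paraconvex_def by blast
    then show ?thesis unfolding cone_le_def xl nb by (simp add: u_def v_def m_def)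
  qed
  have ml: "m \<le> l" by (simp add: m_def)
  have ad: "\<alpha> d \<ge> 0" using assms(3) d by auto
  have cnn: "C * \<alpha> d * (1/d - m/e) \<ge> 0"
  proof -
    have "m / e \<le> l / e" using ml e by (simp add: divide_right_mono)
    also have "l / e = 1 / d" using e d by (simp add: l_def)
    finally show ?thesis using assms(9) ad by simp
  qed
  have K1: "(1/e) *\<^sub>R (v - u) \<in> K" using cone_scale[OF assms(1) vu] e by simp
  have K2: "(C * \<alpha> d * (1/d - m/e)) *\<^sub>R k0 \<in> K" using cone_scale[OF assms(1) assms(7) cnn] .
  have eq: "phi_quot F \<alpha> C k0 x0 h t0 t - phi_quot F \<alpha> C k0 x0 h t0 t1
             + (C * (\<alpha> (t1 - t0) / (t1 - t0))) *\<^sub>R k0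
        = (1/e) *\<^sub>R (v - u) + (C * \<alpha> d * (1/d - m/e)) *\<^sub>R k0"
  proof -
    have le: "l / e = 1 / d" using e d by (simp add: l_def)
    have le2: "(1 - l) / e = 1/e - 1/d" using e d by (simp add: l_def field_simps)
    have "(1/e) *\<^sub>R (v - u) = (l/e) *\<^sub>R F b + ((1 - l)/e) *\<^sub>R F a + (C * m * \<alpha> d / e) *\<^sub>R k0
           - (1/e) *\<^sub>R u"
    proof -
      have s: "(l/e) *\<^sub>R F a + ((1 - l)/e) *\<^sub>R F a = (1/e) *\<^sub>R F a"
        by (simp add: scaleR_add_left[symmetric] add_divide_distrib[symmetric])
      show ?thesis using s by (simp add: v_def algebra_simps)
    qed
    also have "\<dots> = (1/d) *\<^sub>R F b + (1/e - 1/d) *\<^sub>R F a + (C * m * \<alpha> d / e) *\<^sub>R k0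
           - (1/e) *\<^sub>R u" by (simp only: le le2)
    finally have 1: "(1/e) *\<^sub>R (v - u) = \<dots>" .
    show ?thesis unfolding phi_quot_def 1
      by (simp add: u_def a_def b_def d_def[symmetric] e_def[symmetric] algebra_simps
          diff_divide_distrib)
  qed
  show "phi_quot F \<alpha> C k0 x0 h t0 t - phi_quot F \<alpha> C k0 x0 h t0 t1
             + (C * (\<alpha> (t1 - t0) / (t1 - t0))) *\<^sub>R k0 \<in> K"
    unfolding eq by (rule cone_add[OF assms(1) K1 K2])
qed

end
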